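(* In the setting of the context, assume $N_{ij}^c\neq\emptyset$ for all $ij\in E$, $0<\lambda<1$, $r>0$, and $\beta_t=r\beta_{t+1}$ for all $t\ge1$. Let $M=\frac{4(c-1)^2e\lambda}{(1-\lambda)r^2}$. Assume that $\max_{ij\in E}|s_{ij}^{(1)}-s_{ij}^*|<\frac{1}{2(c-1)\beta_1}$ and that for all $t\ge1$, $$\max_{ij\in E,\ B_{ij}^c\neq\emptyset}\ \frac{1}{|B_{ij}^c|}\sum_{L\in B_{ij}^c}e^{-\beta_t s_L^*}(s_L^* )^2<\frac{1}{M\beta_t^2}.$$ Then the LongSync estimates satisfy $$\max_{ij\in E}|s_{ij}^{(t)}-s_{ij}^*|<\frac{r^{t-1}}{\beta_1}\quad\text{for all }t\ge1.$$
   Context: Setting: $d\ge2$, $c\ge3$, undirected simple graph $G=([n],E)$, ground truth $\boldsymbol{R}_i^*\in SO(d)$, arbitrary measurements $\boldsymbol{R}_{ij}\in SO(d)$ for $ij\in E$ with $\boldsymbol{R}_{ji}=\boldsymbol{R}_{ij}^T$, positive parameters $\beta_0,\beta_1,\dots$. Distance $\mathcal D(\boldsymbol{X},\boldsymbol{Y})=\sqrt{1-\operatorname{tr}(\boldsymbol{X}^T\boldsymbol{Y})/d}$. $\boldsymbol{R}_{ij}^*=\boldsymbol{R}_i^*\boldsymbol{R}_j^{*T}$, $s_{ij}^*=\mathcal D(\boldsymbol{R}_{ij},\boldsymbol{R}_{ij}^* )$; edge $e$ is clean if $s_e^*=0$. $N_{ij}^c$ is the set of sequences $L=(i,k_1,\dots,k_{c-2},j)$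 of pairwise distinct vertices with $ik_1,\dots,k_{c-2}j\in E$; $L\setminus\{ij\}$ denotes these $c-1$ edges; $s_L^*=\sum_{e\in L\setminus\{ij\}}s_e^*$. $\boldsymbol{R}_L=\boldsymbol{R}_{ik_1}\cdots\boldsymbol{R}_{k_{c-2}j}$, $d_L=\mathcal D(\boldsymbol{R}_L,\boldsymbol{R}_{ij})$. $G_{ij}^c$ = cycles in $N_{ij}^c$ whose edges in $L\setminus\{ij\}$ are all clean, $B_{ij}^c=N_{ij}^c\setminus G_{ij}^c$, $\lambda=\max_{ij\in E}|B_{ij}^c|/|N_{ij}^c|$. LongSync with $c$-cycles: $w_L^{(0)}=1$; for $t\ge0$, $s_{ij}^{(t)}=\big(\sum_{L\in N_{ij}^c}w_L^{(t)}d_L^2/\sum_{L\in N_{ij}^c}w_L^{(t)}\big)^{1/2}$ and $w_L^{(t+1)}=\prod_{e\in L\setminus\{ij\}}e^{-\beta_t s_e^{(t)}}$. *)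

theory Defs
  imports "HOL-Analysis.Analysis"
begin

type_synonym 'd mat = "real^'d^'d"

definition Dist :: "'d::finite mat \<Rightarrow> 'd mat \<Rightarrow> real" where
  "Dist X Y = sqrt (1 - trace (transpose X ** Y) / real CARD('d))"

text \<open>Consecutive edges of a vertex sequence L = (i,k1,...,k_{c-2},j): the c-1 edges L minus ij.\<close>
definition path_edges :: "nat list \<Rightarrow> (nat \<times> nat) list" where
  "path_edges L = zip L (tl L)"

definition cycles :: "(nat \<times> nat) set \<Rightarrow> nat \<Rightarrow> nat \<Rightarrow> nat \<Rightarrow> nat list set" where
  "cycles E c i j = {L. length L = c \<and> distinct L \<and> hd L = i \<and> last L = j \<and>
                        (\<forall>e \<in> set (path_edges L). e \<in> E)}"

definition path_rot :: "(nat \<Rightarrow> nat \<Rightarrow> 'd::finite mat) \<Rightarrow> nat list \<Rightarrow> 'd mat" where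
  "path_rot Rm L = foldr (\<lambda>(k, l) A. Rm k l ** A) (path_edges L) (mat 1)"

definition dL :: "(nat \<Rightarrow> nat \<Rightarrow> 'd::finite mat) \<Rightarrow> nat \<Rightarrow> nat \<Rightarrow> nat list \<Rightarrow> real" where
  "dL Rm i j L = Dist (path_rot Rm L) (Rm i j)"

definition s_star :: "(nat \<Rightarrow> 'd::finite mat) \<Rightarrow> (nat \<Rightarrow> nat \<Rightarrow> 'd mat) \<Rightarrow> nat \<times> nat \<Rightarrow> real" where
  "s_star Rs Rm e = Dist (Rm (fst e) (snd e)) (Rs (fst e) ** transpose (Rs (snd e)))"

definition sL_star :: "(nat \<Rightarrow> 'd::finite mat) \<Rightarrow> (nat \<Rightarrow> nat \<Rightarrow> 'd mat) \<Rightarrow> nat list \<Rightarrow> real" where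
  "sL_star Rs Rm L = sum_list (map (s_star Rs Rm) (path_edges L))"

definition good_cycles :: "(nat \<Rightarrow> 'd::finite mat) \<Rightarrow> (nat \<Rightarrow> nat \<Rightarrow> 'd mat) \<Rightarrow> (nat \<times> nat) set
    \<Rightarrow> nat \<Rightarrow> nat \<Rightarrow> nat \<Rightarrow> nat list set" where
  "good_cycles Rs Rm E c i j = {L \<in> cycles E c i j. \<forall>e \<in> set (path_edges L). s_star Rs Rm e = 0}"

definition bad_cycles :: "(nat \<Rightarrow> 'd::finite mat) \<Rightarrow> (nat \<Rightarrow> nat \<Rightarrow> 'd mat) \<Rightarrow> (nat \<times> nat) set
    \<Rightarrow> nat \<Rightarrow> nat \<Rightarrow> nat \<Rightarrow> nat list set" where
  "bad_cycles Rs Rm E c i j = cycles E c i j - good_cycles Rs Rm E c i j"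

definition corr_ratio :: "(nat \<Rightarrow> 'd::finite mat) \<Rightarrow> (nat \<Rightarrow> nat \<Rightarrow> 'd mat) \<Rightarrow> (nat \<times> nat) set
    \<Rightarrow> nat \<Rightarrow> real" where
  "corr_ratio Rs Rm E c = Max ((\<lambda>(i, j). real (card (bad_cycles Rs Rm E c i j))
                                         / real (card (cycles E c i j))) ` E)"

text \<open>LongSync iterates: longsync ... t (i,j) = s_ij^{(t)}, with w^{(0)} = 1 and
  w_L^{(t+1)} = prod over e in L minus ij of exp(-beta_t s_e^{(t)}).\<close>
fun longsync :: "(nat \<Rightarrow> nat \<Rightarrow> 'd::finite mat) \<Rightarrow> (nat \<times> nat) set \<Rightarrow> nat \<Rightarrow> (nat \<Rightarrow> real)
    \<Rightarrow> nat \<Rightarrow> nat \<times> nat \<Rightarrow> real" where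
  "longsync Rm E c \<beta> 0 (i, j) =
     sqrt ((\<Sum>L\<in>cycles E c i j. 1 * (dL Rm i j L)\<^sup>2) / (\<Sum>L\<in>cycles E c i j. 1))"
| "longsync Rm E c \<beta> (Suc t) (i, j) =
     (let w = (\<lambda>L. prod_list (map (\<lambda>e. exp (- \<beta> t * longsync Rm E c \<beta> t e)) (path_edges L)))
      in sqrt ((\<Sum>L\<in>cycles E c i j. w L * (dL Rm i j L)\<^sup>2) / (\<Sum>L\<in>cycles E c i j. w L)))"

end

theory Submission
  imports Defs
begin


lemma inner_trace: "(X::real^'n^'n) \<bullet> Y = trace (transpose X ** Y)"
proof -
  have "trace (transpose X ** Y) = (\<Sum>k\<in>UNIV. \<Sum>i\<in>UNIV. X$i$k*Y$i$k)"
    by (simp add: trace_def matrix_matrix_mult_def transpose_def)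
  also have "\<dots> = (\<Sum>i\<in>UNIV. \<Sum>k\<in>UNIV. X$i$k*Y$i$k)" by (rule sum.swap)
  also have "\<dots> = X \<bullet> Y" by (simp add: inner_vec_def)
  finally show ?thesis by simp
qed

lemma norm_orth_left:
  fixes A X :: "real^'n^'n"
  assumes "orthogonal_matrix A" shows "norm (A ** X) = norm X"
proof -
  have "(A ** X) \<bullet> (A ** X) = X \<bullet> X"
    using assms unfolding inner_trace orthogonal_matrix_def
    by (simp add: matrix_transpose_mul matrix_mul_assoc flip: matrix_mul_assoc[of "transpose X"])
  thus ?thesis by (simp add: norm_eq_sqrt_inner)
qed

lemma norm_orth_right:
  fixes B X :: "real^'n^'n"
  assumes "orthogonal_matrix B" shows "norm (X ** B) = norm X"
proof -
  have "(X ** B) \<bullet> (X ** B) = trace (transpose B ** ((transpose X ** X) ** B))"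
    unfolding inner_trace by (simp add: matrix_transpose_mul matrix_mul_assoc)
  also have "\<dots> = trace (((transpose X ** X) ** B) ** transpose B)"
    by (rule trace_mul_sym)
  also have "\<dots> = trace ((transpose X ** X) ** (B ** transpose B))"
    by (simp add: matrix_mul_assoc)
  also have "\<dots> = X \<bullet> X" using assms unfolding inner_trace orthogonal_matrix_def
    by simp
  finally show ?thesis by (simp add: norm_eq_sqrt_inner)
qed

lemma Dist_norm:
  fixes X Y :: "real^'d::finite^'d"
  assumes "orthogonal_matrix X" "orthogonal_matrix Y"
  shows "Dist X Y = norm (X - Y) / sqrt (2 * real CARD('d))"
proof -
  have XX: "X \<bullet> X = real CARD('d)" using assms(1) unfolding inner_trace orthogonal_matrix_def
    by (simp add: trace_I)
  have YY: "Y \<bullet> Y = real CARD('d)" using assms(2) unfolding inner_trace orthogonal_matrix_def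
    by (simp add: trace_I)
  have "(norm (X - Y))^2 = X \<bullet> X - 2 * (X \<bullet> Y) + Y \<bullet> Y"
    by (simp add: power2_norm_eq_inner inner_diff_left inner_diff_right inner_commute)
  hence n2: "(norm (X - Y))^2 = 2 * real CARD('d) - 2 * trace (transpose X ** Y)"
    using XX YY by (simp add: inner_trace)
  have d: "real CARD('d) > 0" by simp
  have "1 - trace (transpose X ** Y) / real CARD('d) = (norm (X - Y))^2 / (2 * real CARD('d))"
    using d by (simp add: n2 field_simps)
  hence "Dist X Y = sqrt ((norm (X - Y))^2 / (2 * real CARD('d)))" by (simp add: Dist_def)
  also have "\<dots> = norm (X - Y) / sqrt (2 * real CARD('d))"
    by (simp add: real_sqrt_divide)
  finally show ?thesis .
qed



lemma grp_tel: "(a::'a::ab_group_add) - c = a - b + (b - c)" by simp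

lemma mm_diff_left: "((A::real^'n^'m) - B) ** (C::real^'p^'n) = A ** C - B ** C"
  by (simp add: matrix_matrix_mult_def vec_eq_iff algebra_simps sum_subtractf)

lemma mm_diff_right: "(A::real^'n^'m) ** ((B::real^'p^'n) - C) = A ** B - A ** C"
  by (simp add: matrix_matrix_mult_def vec_eq_iff algebra_simps sum_subtractf)

lemma path_edges_simps[simp]:
  "path_edges [] = []" "path_edges [x] = []" "path_edges (x # y # rest) = (x, y) # path_edges (y # rest)"
  by (simp_all add: path_edges_def)

lemma path_rot_simps[simp]:
  "path_rot Rm [x] = mat 1" "path_rot Rm (x # y # rest) = Rm x y ** path_rot Rm (y # rest)"
  by (simp_all add: path_rot_def)

lemma length_path_edges: "length (path_edges L) = length L - 1"
  by (simp add: path_edges_def)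

lemma path_rot_orth:
  assumes "\<forall>e\<in>set (path_edges L). orthogonal_matrix (Rm (fst e) (snd e))" "L \<noteq> []"
  shows "orthogonal_matrix (path_rot Rm L)"
  using assms
proof (induction L rule: induct_list012)
  case (3 x y zs)
  thus ?case by (auto intro!: orthogonal_matrix_mul)
qed (auto simp: orthogonal_matrix_id)

lemma telescope:
  fixes Rm :: "nat \<Rightarrow> nat \<Rightarrow> real^'d::finite^'d" and Rs :: "nat \<Rightarrow> real^'d^'d"
  assumes "\<forall>e\<in>set (path_edges L). orthogonal_matrix (Rm (fst e) (snd e))"
    and "\<forall>x\<in>set L. orthogonal_matrix (Rs x)" and "L \<noteq> []"
  shows "norm (path_rot Rm L - Rs (hd L) ** transpose (Rs (last L)))
         \<le> sum_list (map (\<lambda>e. norm (Rm (fst e) (snd e) - Rs (fst e) ** transpose (Rs (snd e)))) (path_edges L))"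
  using assms
proof (induction L rule: induct_list012)
  case (2 x)
  hence "Rs x ** transpose (Rs x) = mat 1" by (simp add: orthogonal_matrix_def)
  thus ?case by simp
next
  case (3 x y zs)
  let ?P = "path_rot Rm (y # zs)"
  let ?Q = "Rs y ** transpose (Rs (last (y # zs)))"
  let ?S = "Rs x ** transpose (Rs y)"
  have oP: "orthogonal_matrix ?P" using 3(3) by (intro path_rot_orth) auto
  have oS: "orthogonal_matrix ?S" using 3(4) by (auto intro!: orthogonal_matrix_mul)
  have IH: "norm (?P - ?Q) \<le> sum_list (map (\<lambda>e. norm (Rm (fst e) (snd e) - Rs (fst e) ** transpose (Rs (snd e)))) (path_edges (y # zs)))"
    using 3 by auto
  have yy: "transpose (Rs y) ** Rs y = mat 1" using 3(4) by (simp add: orthogonal_matrix_def)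
  have "?S ** ?Q = Rs x ** ((transpose (Rs y) ** Rs y) ** transpose (Rs (last (y#zs))))"
    by (simp only: matrix_mul_assoc)
  hence SQ: "?S ** ?Q = Rs x ** transpose (Rs (last (y # zs)))"
    by (simp only: yy matrix_mul_lid)
  have eq: "Rm x y ** ?P - Rs x ** transpose (Rs (last (y # zs))) = (Rm x y - ?S) ** ?P + ?S ** (?P - ?Q)"
    by (simp only: SQ mm_diff_left mm_diff_right grp_tel)
  have "norm (Rm x y ** ?P - Rs x ** transpose (Rs (last (y # zs)))) \<le> norm ((Rm x y - ?S) ** ?P) + norm (?S ** (?P - ?Q))"
    unfolding eq by (rule norm_triangle_ineq)
  also have "\<dots> = norm (Rm x y - ?S) + norm (?P - ?Q)"
    using oP oS by (simp add: norm_orth_left norm_orth_right)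
  finally show ?case using IH by simp
qed simp

lemma mem_path_edges:
  assumes "length L \<ge> 2" "x \<in> set L"
  shows "\<exists>e\<in>set (path_edges L). x = fst e \<or> x = snd e"
  using assms
proof (induction L rule: induct_list012)
  case (3 a b zs)
  show ?case
  proof (cases "x = a \<or> x = b")
    case True thus ?thesis by auto
  next
    case False
    hence "x \<in> set zs" using 3 by auto
    hence "zs \<noteq> []" by auto
    hence "length (b # zs) \<ge> 2" by (cases zs) auto
    then obtain e where "e\<in>set (path_edges (b#zs))" "x = fst e \<or> x = snd e"
      using 3(2) \<open>x \<in> set zs\<close> by auto
    thus ?thesis by auto
  qed
qed auto

lemma sum_list_div: "sum_list (map f xs) / (k::real) = sum_list (map (\<lambda>x. f x / k) xs)"
  by (induction xs) (auto simp: add_divide_distrib)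

lemma sum_list_close:
  assumes "\<forall>x\<in>set xs. \<bar>f x - g x\<bar> \<le> (\<delta>::real)"
  shows "\<bar>sum_list (map f xs) - sum_list (map g xs)\<bar> \<le> real (length xs) * \<delta>"
  using assms
proof (induction xs)
  case (Cons a xs)
  have "\<bar>sum_list (map f (a#xs)) - sum_list (map g (a#xs))\<bar> \<le> \<bar>f a - g a\<bar> + \<bar>sum_list (map f xs) - sum_list (map g xs)\<bar>"
    by simp
  thus ?case using Cons by (auto simp: algebra_simps)
qed simp

lemma prod_list_exp: "prod_list (map (\<lambda>e. exp (f e :: real)) xs) = exp (sum_list (map f xs))"
  by (induction xs) (auto simp: exp_add[symmetric])



lemma weighted:
  fixes w d x :: "'a \<Rightarrow> real"
  assumes fin: "finite N" and GN: "G \<subseteq> N" and Gne: "G \<noteq> {}"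
    and wpos: "\<forall>L\<in>N. w L > 0" and dnn: "\<forall>L\<in>N. d L \<ge> 0" and s0: "s \<ge> 0"
    and dx: "\<forall>L\<in>N. \<bar>d L - s\<bar> \<le> x L" and xG: "\<forall>L\<in>G. x L = 0"
  shows "(sqrt ((\<Sum>L\<in>N. w L * (d L)^2) / (\<Sum>L\<in>N. w L)) - s)^2
         \<le> (\<Sum>L\<in>N-G. w L * (x L)^2) / (\<Sum>L\<in>G. w L)"
proof -
  define W where "W = (\<Sum>L\<in>N. w L)"
  define D2 where "D2 = (\<Sum>L\<in>N. w L * (d L)^2)"
  define D1 where "D1 = (\<Sum>L\<in>N. w L * d L)"
  have Nne: "N \<noteq> {}" using GN Gne by auto
  have W0: "W > 0" unfolding W_def using fin Nne wpos by (intro sum_pos) auto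
  define m where "m = D1 / W"
  have "0 \<le> (\<Sum>L\<in>N. w L * (d L - m)^2)"
    using wpos by (intro sum_nonneg) (auto intro: less_imp_le)
  also have "(\<Sum>L\<in>N. w L * (d L - m)^2) = D2 - 2 * m * D1 + m^2 * W"
    unfolding D2_def D1_def W_def
    by (simp add: power2_diff algebra_simps sum.distrib sum_subtractf sum_distrib_left sum_distrib_right)
  finally have "0 \<le> D2 - 2 * m * D1 + m^2 * W" .
  hence "m^2 * W \<le> D2" using W0 unfolding m_def by (simp add: power2_eq_square field_simps)
  hence m2: "m^2 \<le> D2 / W" using W0 by (simp add: field_simps)
  define a where "a = sqrt (D2 / W)"
  have a2: "a^2 = D2 / W" unfolding a_def using m2
    by (intro real_sqrt_pow2) (meson order_trans zero_le_power2)
  have ma: "m \<le> a"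
  proof -
    have "m \<le> \<bar>m\<bar>" by simp
    also have "\<bar>m\<bar> = sqrt (m^2)" by simp
    also have "\<dots> \<le> a" unfolding a_def using m2 by (rule real_sqrt_le_mono)
    finally show ?thesis .
  qed
  have "(a - s)^2 = a^2 - 2 * a * s + s^2" by (simp add: power2_diff)
  also have "\<dots> \<le> D2 / W - 2 * m * s + s^2" using a2 ma s0 by (simp add: mult_right_mono)
  also have "\<dots> = (\<Sum>L\<in>N. w L * (d L - s)^2) / W"
  proof -
    have "(\<Sum>L\<in>N. w L * (d L - s)^2) = D2 - 2 * s * D1 + s^2 * W"
      unfolding D2_def D1_def W_def
      by (simp add: power2_diff algebra_simps sum.distrib sum_subtractf sum_distrib_left sum_distrib_right)
    thus ?thesis using W0 unfolding m_def by (simp add: field_simps)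
  qed
  also have "\<dots> \<le> (\<Sum>L\<in>N. w L * (x L)^2) / W"
  proof (intro divide_right_mono sum_mono)
    fix L assume L: "L \<in> N"
    have "(d L - s)^2 = \<bar>d L - s\<bar>^2" by simp
    also have "\<dots> \<le> (x L)^2" using dx L by (intro power_mono) auto
    finally show "w L * (d L - s)^2 \<le> w L * (x L)^2" using wpos L
      by (intro mult_left_mono) auto
  qed (use W0 in auto)
  also have "(\<Sum>L\<in>N. w L * (x L)^2) = (\<Sum>L\<in>N-G. w L * (x L)^2)"
    using fin GN xG by (intro sum.mono_neutral_right) auto
  also have "(\<Sum>L\<in>N-G. w L * (x L)^2) / W \<le> (\<Sum>L\<in>N-G. w L * (x L)^2) / (\<Sum>L\<in>G. w L)"
  proof (rule divide_left_mono)
    show "0 \<le> (\<Sum>L\<in>N-G. w L * (x L)^2)" using wpos by (intro sum_nonneg) (auto intro: less_imp_le)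
    show "(\<Sum>L\<in>G. w L) \<le> W" unfolding W_def using fin GN wpos
      by (intro sum_mono2) (auto intro: less_imp_le)
    have "(\<Sum>L\<in>G. w L) > 0" using fin GN Gne wpos by (intro sum_pos) (auto intro: finite_subset)
    thus "0 < W * (\<Sum>L\<in>G. w L)" using W0 by simp
  qed
  finally show ?thesis unfolding a_def D2_def W_def .
qed



lemma sum_list_zero: "(\<forall>x\<in>set xs. f x = (0::real)) \<Longrightarrow> sum_list (map f xs) = 0"
  by (induction xs) auto

lemma sum_list_cmult: "sum_list (map (\<lambda>x. (a::real) * f x) xs) = a * sum_list (map f xs)"
  by (induction xs) (auto simp: algebra_simps)

lemma aux: fixes lam G r X b :: real
  assumes "lam>0" "G>0" "r>0" "X>0" "b>0"
  shows "(lam*G) * (r\<^sup>2/(G*(4*X\<^sup>2*lam*(r*b)\<^sup>2))) = (1/(2*X*b))\<^sup>2"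
  using assms by (simp add: field_simps power2_eq_square)

theorem mainTheorem4:
  fixes n c :: nat
    and E :: "(nat \<times> nat) set"
    and Rs :: "nat \<Rightarrow> real^'d::finite^'d"
    and Rm :: "nat \<Rightarrow> nat \<Rightarrow> real^'d^'d"
    and \<beta> :: "nat \<Rightarrow> real"
    and r :: real
  assumes d2: "CARD('d) \<ge> 2"
    and c3: "c \<ge> 3"
    and E_V: "E \<subseteq> {..<n} \<times> {..<n}"
    and E_sym: "\<And>i j. (i, j) \<in> E \<Longrightarrow> (j, i) \<in> E"
    and E_irrefl: "\<And>i. (i, i) \<notin> E"
    and Rs_SO: "\<And>i. i < n \<Longrightarrow> rotation_matrix (Rs i)"
    and Rm_SO: "\<And>i j. (i, j) \<in> E \<Longrightarrow> rotation_matrix (Rm i j)"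
    and Rm_sym: "\<And>i j. (i, j) \<in> E \<Longrightarrow> Rm j i = transpose (Rm i j)"
    and beta_pos: "\<And>t. \<beta> t > 0"
    and N_ne: "\<And>i j. (i, j) \<in> E \<Longrightarrow> cycles E c i j \<noteq> {}"
    and lam_pos: "0 < corr_ratio Rs Rm E c"
    and lam_lt1: "corr_ratio Rs Rm E c < 1"
    and r_pos: "r > 0"
    and beta_geom: "\<And>t. t \<ge> 1 \<Longrightarrow> \<beta> t = r * \<beta> (Suc t)"
    and init: "\<And>i j. (i, j) \<in> E \<Longrightarrow>
        \<bar>longsync Rm E c \<beta> 1 (i, j) - s_star Rs Rm (i, j)\<bar> < 1 / (2 * (real c - 1) * \<beta> 1)"
    and bad_cond: "\<And>t i j. t \<ge> 1 \<Longrightarrow> (i, j) \<in> E \<Longrightarrow> bad_cycles Rs Rm E c i j \<noteq> {} \<Longrightarrow>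
        (1 / real (card (bad_cycles Rs Rm E c i j))) *
          (\<Sum>L\<in>bad_cycles Rs Rm E c i j. exp (- \<beta> t * sL_star Rs Rm L) * (sL_star Rs Rm L)\<^sup>2)
        < 1 / ((4 * (real c - 1)\<^sup>2 * exp 1 * corr_ratio Rs Rm E c
                 / ((1 - corr_ratio Rs Rm E c) * r\<^sup>2)) * (\<beta> t)\<^sup>2)"
  shows "\<forall>t \<ge> 1. \<forall>(i, j) \<in> E.
           \<bar>longsync Rm E c \<beta> t (i, j) - s_star Rs Rm (i, j)\<bar> < r ^ (t - 1) / \<beta> 1"
proof -
  define k where "k = sqrt (2 * real CARD('d))"
  have k0: "k > 0" unfolding k_def by simp
  define lam where "lam = corr_ratio Rs Rm E c"
  have finE: "finite E" using E_V by (rule finite_subset) auto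
  have orthRs: "orthogonal_matrix (Rs x)" if "x < n" for x
    using Rs_SO[OF that] by (simp add: rotation_matrix_def)
  have orthRm: "orthogonal_matrix (Rm (fst e) (snd e))" if "e \<in> E" for e
    using Rm_SO[of "fst e" "snd e"] that by (simp add: rotation_matrix_def)
  have Elt: "fst e < n \<and> snd e < n" if "e \<in> E" for e using E_V that by auto
  have sstar_k: "s_star Rs Rm e = norm (Rm (fst e) (snd e) - Rs (fst e) ** transpose (Rs (snd e))) / k"
    if "e \<in> E" for e
    unfolding s_star_def k_def
    using that Elt[OF that] orthRm[OF that] orthRs
    by (intro Dist_norm) (auto intro!: orthogonal_matrix_mul)
  have s_nn: "s_star Rs Rm e \<ge> 0" if "e \<in> E" for e using sstar_k[OF that] k0 by simp
  have cyc: "L \<noteq> [] \<and> length L = c \<and> hd L = i \<and> last L = j \<and> (\<forall>e\<in>set (path_edges L). e \<in> E)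
       \<and> (\<forall>x\<in>set L. x < n)" if "L \<in> cycles E c i j" for L i j
  proof -
    have L: "length L = c" "hd L = i" "last L = j" "\<forall>e\<in>set (path_edges L). e \<in> E"
      using that by (auto simp: cycles_def)
    have "x < n" if "x \<in> set L" for x
    proof -
      obtain e where "e \<in> set (path_edges L)" "x = fst e \<or> x = snd e"
        using mem_path_edges[of L x] L(1) c3 \<open>x \<in> set L\<close> by auto
      thus ?thesis using L(4) Elt[of e] by auto
    qed
    thus ?thesis using L c3 by auto
  qed
  have finN: "finite (cycles E c i j)" for i j
  proof (rule finite_subset)
    show "cycles E c i j \<subseteq> {xs. set xs \<subseteq> {..<n} \<and> length xs = c}" using cyc by blast
  qed (rule finite_lists_length_eq, simp)
  have dclose: "\<bar>dL Rm i j L - s_star Rs Rm (i, j)\<bar> \<le> sL_star Rs Rm L"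
    if ij: "(i, j) \<in> E" and L: "L \<in> cycles E c i j" for i j L
  proof -
    note C = cyc[OF L]
    define P where "P = path_rot Rm L"
    define M where "M = Rm i j"
    define S where "S = Rs i ** transpose (Rs j)"
    have oP: "orthogonal_matrix P" unfolding P_def using C orthRm
      by (intro path_rot_orth) auto
    have oM: "orthogonal_matrix M" unfolding M_def using orthRm[OF ij] by simp
    have dk: "dL Rm i j L = norm (P - M) / k" unfolding dL_def P_def M_def k_def
      using oP oM by (simp add: P_def M_def Dist_norm)
    have sk: "s_star Rs Rm (i, j) = norm (M - S) / k" using sstar_k[OF ij] by (simp add: M_def S_def)
    have tel: "norm (P - S) \<le> sum_list (map (\<lambda>e. norm (Rm (fst e) (snd e) - Rs (fst e) ** transpose (Rs (snd e)))) (path_edges L))"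
    proof -
      have "norm (path_rot Rm L - Rs (hd L) ** transpose (Rs (last L))) \<le> sum_list (map (\<lambda>e. norm (Rm (fst e) (snd e) - Rs (fst e) ** transpose (Rs (snd e)))) (path_edges L))"
        by (rule telescope) (use C orthRm orthRs in auto)
      thus ?thesis using C by (simp add: P_def S_def)
    qed
    have "\<forall>e\<in>set (path_edges L). norm (Rm (fst e) (snd e) - Rs (fst e) ** transpose (Rs (snd e))) / k = s_star Rs Rm e"
      using C sstar_k by auto
    hence mapeq: "map (\<lambda>e. norm (Rm (fst e) (snd e) - Rs (fst e) ** transpose (Rs (snd e))) / k) (path_edges L) = map (s_star Rs Rm) (path_edges L)"
      by (simp only: map_eq_conv)
    have "norm (P - S) / k \<le> sum_list (map (\<lambda>e. norm (Rm (fst e) (snd e) - Rs (fst e) ** transpose (Rs (snd e)))) (path_edges L)) / k"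
      by (rule divide_right_mono[OF tel]) (use k0 in simp)
    hence tel2: "norm (P - S) / k \<le> sL_star Rs Rm L"
      by (simp only: sum_list_div mapeq sL_star_def)
    have "\<bar>norm (P - M) - norm (M - S)\<bar> \<le> norm (P - S)"
      using dist_triangle[of P M S] dist_triangle[of M S P]
      by (simp add: dist_norm norm_minus_commute abs_le_iff)
    hence "\<bar>norm (P - M) - norm (M - S)\<bar> / k \<le> norm (P - S) / k"
      by (rule divide_right_mono) (use k0 in simp)
    moreover have "\<bar>norm (P - M) - norm (M - S)\<bar> / k = \<bar>norm (P - M) / k - norm (M - S) / k\<bar>"
      using k0 by (simp add: abs_div_pos diff_divide_distrib)
    ultimately have "\<bar>norm (P - M) / k - norm (M - S) / k\<bar> \<le> norm (P - S) / k" by simp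
    thus ?thesis using tel2 dk sk by linarith
  qed
  have dnn: "\<forall>L\<in>cycles E c i j. dL Rm i j L \<ge> 0" if ij: "(i, j) \<in> E" for i j
  proof
    fix L assume L: "L \<in> cycles E c i j"
    note C = cyc[OF L]
    have oP: "orthogonal_matrix (path_rot Rm L)" using C orthRm
      by (intro path_rot_orth) auto
    have oM: "orthogonal_matrix (Rm i j)" using orthRm[OF ij] by simp
    have "dL Rm i j L = norm (path_rot Rm L - Rm i j) / k" unfolding dL_def k_def
      using oP oM by (simp add: Dist_norm)
    thus "dL Rm i j L \<ge> 0" using k0 by simp
  qed
  have ratio: "real (card (bad_cycles Rs Rm E c i j)) \<le> lam * real (card (cycles E c i j))"
    if ij: "(i, j) \<in> E" for i j
  proof -
    have "real (card (bad_cycles Rs Rm E c i j)) / real (card (cycles E c i j)) \<le> lam"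
      unfolding lam_def corr_ratio_def using finE ij
      by (intro Max_ge) (auto intro: rev_image_eqI[of "(i,j)"])
    moreover have "card (cycles E c i j) > 0" using finN N_ne[OF ij] by (simp add: card_gt_0_iff)
    ultimately show ?thesis by (simp add: field_simps)
  qed
  define Q where "Q t = (\<forall>e\<in>E. \<bar>longsync Rm E c \<beta> t e - s_star Rs Rm e\<bar> < 1 / (2 * (real c - 1) * \<beta> t))" for t
  have step: "Q (Suc t)" if t1: "t \<ge> 1" and Qt: "Q t" for t
  proof -
    have bt: "\<beta> t = r * \<beta> (Suc t)" by (rule beta_geom[OF t1])
    have btp: "\<beta> t > 0" "\<beta> (Suc t) > 0" using beta_pos by auto
    define \<delta> where "\<delta> = 1 / (2 * (real c - 1) * \<beta> t)"
    have cpos: "real c - 1 \<ge> 2" using c3 by simp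
    have rc1: "real (c - 1) = real c - 1" using c3 by simp
    have bd: "\<beta> t * (real (c - 1) * \<delta>) = 1/2"
    proof -
      have "\<beta> t * (real (c - 1) * \<delta>) = (\<beta> t * (real c - 1)) / (2 * ((real c - 1) * \<beta> t))"
        unfolding \<delta>_def rc1 by simp
      also have "\<dots> = 1/2" using cpos btp by (simp add: mult.commute)
      finally show ?thesis .
    qed
    show ?thesis unfolding Q_def
    proof
      fix e assume eE: "e \<in> E"
      obtain i j where e: "e = (i, j)" by (cases e) blast
      hence ij: "(i, j) \<in> E" using eE by simp
      define N where "N = cycles E c i j"
      define G where "G = good_cycles Rs Rm E c i j"
      define B where "B = bad_cycles Rs Rm E c i j"
      define w where "w L = prod_list (map (\<lambda>e. exp (- \<beta> t * longsync Rm E c \<beta> t e)) (path_edges L))" for L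
      define sx where "sx L = sL_star Rs Rm L" for L
      define s where "s = s_star Rs Rm (i, j)"
      define a where "a = longsync Rm E c \<beta> (Suc t) (i, j)"
      have a_eq: "a = sqrt ((\<Sum>L\<in>N. w L * (dL Rm i j L)\<^sup>2) / (\<Sum>L\<in>N. w L))"
        unfolding a_def N_def w_def by (simp add: Let_def)
      have GN: "G \<subseteq> N" by (auto simp: G_def N_def good_cycles_def)
      have BNG: "B = N - G" by (simp add: B_def N_def G_def bad_cycles_def)
      have finNN: "finite N" unfolding N_def by (rule finN)
      have wexp: "w L = exp (- \<beta> t * sum_list (map (longsync Rm E c \<beta> t) (path_edges L)))" for L
        unfolding w_def prod_list_exp sum_list_cmult by simp
      have wpos: "\<forall>L\<in>N. w L > 0" by (simp add: wexp)
      have Sclose: "\<bar>sum_list (map (longsync Rm E c \<beta> t) (path_edges L)) - sx L\<bar> \<le> real (c - 1) * \<delta>"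
        if L: "L \<in> N" for L
      proof -
        note C = cyc[OF L[unfolded N_def]]
        have "\<forall>e\<in>set (path_edges L). \<bar>longsync Rm E c \<beta> t e - s_star Rs Rm e\<bar> \<le> \<delta>"
          using Qt C unfolding Q_def \<delta>_def by (auto intro: less_imp_le)
        hence "\<bar>sum_list (map (longsync Rm E c \<beta> t) (path_edges L)) - sum_list (map (s_star Rs Rm) (path_edges L))\<bar>
               \<le> real (length (path_edges L)) * \<delta>" by (rule sum_list_close)
        thus ?thesis using C by (simp add: length_path_edges sx_def sL_star_def)
      qed
      have wup: "w L \<le> exp (1/2) * exp (- \<beta> t * sx L)" if L: "L \<in> N" for L
      proof -
        have "\<beta> t * sum_list (map (longsync Rm E c \<beta> t) (path_edges L)) \<ge> \<beta> t * (sx L - real (c - 1) * \<delta>)"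
          using Sclose[OF L] btp by (intro mult_left_mono) auto
        moreover have "\<beta> t * (sx L - real (c - 1) * \<delta>) = \<beta> t * sx L - 1/2"
          using bd[unfolded rc1] unfolding rc1 by (simp add: right_diff_distrib)
        ultimately have "- \<beta> t * sum_list (map (longsync Rm E c \<beta> t) (path_edges L)) \<le> 1/2 + (- \<beta> t * sx L)"
          by linarith
        thus ?thesis unfolding wexp by (simp flip: exp_add)
      qed
      have wlo: "exp (- 1/2) * exp (- \<beta> t * sx L) \<le> w L" if L: "L \<in> N" for L
      proof -
        have "\<beta> t * sum_list (map (longsync Rm E c \<beta> t) (path_edges L)) \<le> \<beta> t * (sx L + real (c - 1) * \<delta>)"
          using Sclose[OF L] btp by (intro mult_left_mono) auto
        moreover have "\<beta> t * (sx L + real (c - 1) * \<delta>) = \<beta> t * sx L + 1/2"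
          using bd[unfolded rc1] unfolding rc1 by (simp add: distrib_left)
        ultimately have "- 1/2 + (- \<beta> t * sx L) \<le> - \<beta> t * sum_list (map (longsync Rm E c \<beta> t) (path_edges L))"
          by linarith
        thus ?thesis unfolding wexp by (simp flip: exp_add)
      qed
      have sxG: "\<forall>L\<in>G. sx L = 0"
        unfolding G_def good_cycles_def sx_def sL_star_def by (auto intro: sum_list_zero)
      have cardN: "card N > 0" using finNN N_ne[OF ij] by (simp add: N_def card_gt_0_iff)
      have cardNGB: "real (card N) = real (card G) + real (card B)"
        using BNG GN finNN by (simp add: card_Diff_subset finite_subset card_mono)
      have Bratio: "real (card B) \<le> lam * real (card N)" using ratio[OF ij] by (simp add: B_def N_def)
      have Gpos: "real (card G) > 0"
        using Bratio cardN lam_lt1 cardNGB unfolding lam_def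
        by (smt (verit, ccfv_SIG) mult_less_cancel_right2 of_nat_0_less_iff)
      hence Gne: "G \<noteq> {}" by auto
      have main: "(a - s)\<^sup>2 \<le> (\<Sum>L\<in>N-G. w L * (sx L)\<^sup>2) / (\<Sum>L\<in>G. w L)"
        unfolding a_eq
      proof (rule weighted[OF finNN GN Gne wpos])
        show "\<forall>L\<in>N. 0 \<le> dL Rm i j L"
          using dnn[OF ij] by (simp add: N_def)
        show "0 \<le> s" unfolding s_def using s_nn[OF ij] .
        show "\<forall>L\<in>N. \<bar>dL Rm i j L - s\<bar> \<le> sx L" using dclose[OF ij] by (simp add: N_def s_def sx_def)
        show "\<forall>L\<in>G. sx L = 0" by (rule sxG)
      qed
      define T where "T = (\<Sum>L\<in>B. exp (- \<beta> t * sx L) * (sx L)\<^sup>2)"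
      have num: "(\<Sum>L\<in>N-G. w L * (sx L)\<^sup>2) \<le> exp (1/2) * T"
        unfolding T_def sum_distrib_left BNG[symmetric]
      proof (rule sum_mono)
        fix L assume "L \<in> B"
        hence L: "L \<in> N" using BNG by auto
        show "w L * (sx L)\<^sup>2 \<le> exp (1/2) * (exp (- \<beta> t * sx L) * (sx L)\<^sup>2)"
        proof -
          have "w L * (sx L)\<^sup>2 \<le> (exp (1/2) * exp (- \<beta> t * sx L)) * (sx L)\<^sup>2"
            by (rule mult_right_mono[OF wup[OF L]]) simp
          thus ?thesis by (simp only: mult.assoc)
        qed
      qed
      have den: "real (card G) * exp (- 1/2) \<le> (\<Sum>L\<in>G. w L)"
      proof -
        have "(\<Sum>L\<in>G. exp (- 1/2)) \<le> (\<Sum>L\<in>G. w L)"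
        proof (rule sum_mono)
          fix L assume LG: "L \<in> G"
          thus "exp (- 1/2) \<le> w L" using wlo[of L] GN sxG by auto
        qed
        thus ?thesis by simp
      qed
      have Tnn: "T \<ge> 0" unfolding T_def by (intro sum_nonneg) auto
      have frac: "(\<Sum>L\<in>N-G. w L * (sx L)\<^sup>2) / (\<Sum>L\<in>G. w L) \<le> exp 1 * T / real (card G)"
      proof -
        have "(\<Sum>L\<in>N-G. w L * (sx L)\<^sup>2) / (\<Sum>L\<in>G. w L) \<le> (exp (1/2) * T) / (real (card G) * exp (- 1/2))"
          using num den Gpos Tnn by (intro frac_le) (auto intro: sum_nonneg)
        also have "\<dots> = exp 1 * T / real (card G)"
        proof -
          have ee: "exp (1/2::real) = exp 1 * exp (- 1/2)" by (simp flip: exp_add)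
          show ?thesis unfolding ee using Gpos by simp
        qed
        finally show ?thesis .
      qed
      define M where "M = 4 * (real c - 1)\<^sup>2 * exp 1 * lam / ((1 - lam) * r\<^sup>2)"
      have Mpos: "M > 0" unfolding M_def using lam_pos lam_lt1 r_pos cpos unfolding lam_def by simp
      have target: "(a - s)\<^sup>2 < (1 / (2 * (real c - 1) * \<beta> (Suc t)))\<^sup>2"
      proof (cases "B = {}")
        case True
        hence "N - G = {}" using BNG by simp
        hence z: "(\<Sum>L\<in>N-G. w L * (sx L)\<^sup>2) = 0" by (simp only: sum.empty)
        have "(a - s)\<^sup>2 \<le> 0" using main unfolding z by simp
        also have "0 < (1 / (2 * (real c - 1) * \<beta> (Suc t)))\<^sup>2" using cpos btp by simp
        finally show ?thesis .
      next
        case False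
        have Bpos: "real (card B) > 0" using False BNG finNN by (simp add: card_gt_0_iff)
        have "(1 / real (card B)) * T < 1 / (M * (\<beta> t)\<^sup>2)"
          using bad_cond[OF t1 ij] False unfolding T_def B_def M_def sx_def lam_def by simp
        hence Tlt: "T < real (card B) / (M * (\<beta> t)\<^sup>2)" using Bpos by (simp add: field_simps)
        have "(a - s)\<^sup>2 \<le> exp 1 * T / real (card G)" using main frac by linarith
        also have "\<dots> < exp 1 * (real (card B) / (M * (\<beta> t)\<^sup>2)) / real (card G)"
          using Tlt Gpos by (intro divide_strict_right_mono mult_strict_left_mono) auto
        also have "\<dots> = (real (card B) * (1 - lam)) * (r\<^sup>2 / (real (card G) * (4 * (real c - 1)\<^sup>2 * lam * (\<beta> t)\<^sup>2)))"
          unfolding M_def using lam_pos lam_lt1 r_pos cpos btp Gpos unfolding lam_def by (simp add: field_simps)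
        also have "\<dots> \<le> (lam * real (card G)) * (r\<^sup>2 / (real (card G) * (4 * (real c - 1)\<^sup>2 * lam * (\<beta> t)\<^sup>2)))"
        proof (rule mult_right_mono)
          show "real (card B) * (1 - lam) \<le> lam * real (card G)" using Bratio cardNGB by (simp add: algebra_simps)
          show "0 \<le> r\<^sup>2 / (real (card G) * (4 * (real c - 1)\<^sup>2 * lam * (\<beta> t)\<^sup>2))"
            using lam_pos Gpos unfolding lam_def by simp
        qed
        also have "\<dots> = (1 / (2 * (real c - 1) * \<beta> (Suc t)))\<^sup>2"
        proof -
          have l0: "lam > 0" using lam_pos by (simp add: lam_def)
          have x0: "real c - 1 > 0" using cpos by simp
          show ?thesis unfolding bt by (rule aux[OF l0 Gpos r_pos x0 btp(2)])
        qed
        finally show ?thesis .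
      qed
      have t2: "\<bar>a - s\<bar>^2 < (1 / (2 * (real c - 1) * \<beta> (Suc t)))^2"
        using target by (simp only: power2_abs)
      have y0: "0 \<le> 1 / (2 * (real c - 1) * \<beta> (Suc t))" using cpos btp by simp
      have "\<bar>a - s\<bar> < 1 / (2 * (real c - 1) * \<beta> (Suc t))"
        by (rule power_less_imp_less_base[OF t2 y0])
      thus "\<bar>longsync Rm E c \<beta> (Suc t) e - s_star Rs Rm e\<bar> < 1 / (2 * (real c - 1) * \<beta> (Suc t))"
        by (simp only: a_def s_def e)
    qed
  qed
  have Qall: "Q t" if "t \<ge> 1" for t
    using that
  proof (induction t rule: dec_induct)
    case base thus ?case unfolding Q_def using init by auto
  next
    case (step m) thus ?case using \<open>\<And>t. 1 \<le> t \<Longrightarrow> Q t \<Longrightarrow> Q (Suc t)\<close> by blast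
  qed
  have bpow: "\<beta> t * r ^ (t - 1) = \<beta> 1" if "t \<ge> 1" for t
    using that
  proof (induction t rule: dec_induct)
    case (step m)
    have "\<beta> (Suc m) * r ^ (Suc m - 1) = \<beta> m * r ^ (m - 1)"
      using step(1) beta_geom[OF step(1)] by (cases m) (auto simp: algebra_simps)
    thus ?case using step(3) by simp
  qed simp
  have fin: "\<bar>longsync Rm E c \<beta> t (i, j) - s_star Rs Rm (i, j)\<bar> < r ^ (t - 1) / \<beta> 1"
    if t1: "t \<ge> 1" and ij: "(i, j) \<in> E" for t i j
  proof -
    have "\<bar>longsync Rm E c \<beta> t (i, j) - s_star Rs Rm (i, j)\<bar> < 1 / (2 * (real c - 1) * \<beta> t)"
      using Qall[OF t1] ij unfolding Q_def by auto
    also have "\<dots> \<le> 1 / \<beta> t" using beta_pos[of t] c3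
      by (intro divide_left_mono) (auto simp: field_simps)
    also have "\<dots> = r ^ (t - 1) / \<beta> 1"
    proof -
      have "r ^ (t - 1) / \<beta> 1 = r ^ (t - 1) / (\<beta> t * r ^ (t - 1))" by (simp only: bpow[OF t1])
      also have "\<dots> = 1 / \<beta> t" using r_pos beta_pos[of t] by simp
      finally show ?thesis by simp
    qed
    finally show ?thesis .
  qed
  show ?thesis using fin by auto
qed


end
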